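(* Let $N\in\mathbb{C}^{m\times n}$ have rank $r$ and singular value decomposition $N=U\begin{pmatrix}\Sigma & 0\\ 0 & 0\end{pmatrix}V^{\ast}$, where $\Sigma\in\mathbb{C}^{r\times r}$ is diagonal with positive diagonal entries and $U\in\mathbb{C}^{m\times m}$, $V\in\mathbb{C}^{n\times n}$ are unitary. Let $X\in\mathbb{C}^{m\times m}$ and $Y\in\mathbb{C}^{n\times n}$ be nonsingular and let $M=XNY$. Assume that $X=U\begin{pmatrix}X_{1} & 0\\ X_{2} & X_{4}\end{pmatrix}U^{\ast}$ for some blocks $X_{1}\in\mathbb{C}^{r\times r}$, $X_{2}\in\mathbb{C}^{(m-r)\times r}$, $X_{4}\in\mathbb{C}^{(m-r)\times(m-r)}$, and $Y=V\begin{pmatrix}Y_{1} & Y_{3}\\ 0 & Y_{4}\end{pmatrix}V^{\ast}$ for some blocks $Y_{1}\in\mathbb{C}^{r\times r}$, $Y_{3}\in\mathbb{C}^{r\times(n-r)}$, $Y_{4}\in\mathbb{C}^{(n-r)\times(n-r)}$. If both $XE_{N}$ and $F_{N}Y$ are Hermitian, then $$M^{\dagger}=(I+L^{\ast})(I+LL^{\ast})^{-1}Y^{-1}N^{\dagger}X^{-1}(I+R^{\ast}R)^{-1}(I+R^{\ast}),$$ where $R=XE_{N}X^{-1}(E_{N}-I)$ and $L=(F_{N}-I)Y^{-1}F_{N}Y$.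
   Context: For a complex matrix $A$, $A^{\ast}$ is its conjugate transpose and $A^{\dagger}$ its Moore--Penrose inverse. $E_{A}:=I-AA^{\dagger}$ and $F_{A}:=I-A^{\dagger}A$. $I$ denotes an identity matrix of the appropriate size. *)

theory Defs
  imports "Jordan_Normal_Form.Schur_Decomposition" "Jordan_Normal_Form.DL_Rank"
begin

definition unitary_mat :: "complex mat \<Rightarrow> nat \<Rightarrow> bool" where
  "unitary_mat U n \<longleftrightarrow> U \<in> carrier_mat n n \<and>
     mat_adjoint U * U = 1\<^sub>m n \<and> U * mat_adjoint U = 1\<^sub>m n"

definition hermitian_mat :: "complex mat \<Rightarrow> bool" where
  "hermitian_mat A \<longleftrightarrow> square_mat A \<and> mat_adjoint A = A"

text \<open>The (two-sided) inverse of a square matrix (meaningful when A is nonsingular).\<close>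
definition mat_inv :: "complex mat \<Rightarrow> complex mat" where
  "mat_inv A = (THE B. B \<in> carrier_mat (dim_row A) (dim_row A) \<and>
      A * B = 1\<^sub>m (dim_row A) \<and> B * A = 1\<^sub>m (dim_row A))"

definition penrose :: "complex mat \<Rightarrow> complex mat \<Rightarrow> bool" where
  "penrose A B \<longleftrightarrow> B \<in> carrier_mat (dim_col A) (dim_row A) \<and>
     A * B * A = A \<and> B * A * B = B \<and>
     mat_adjoint (A * B) = A * B \<and> mat_adjoint (B * A) = B * A"

definition mp_inv :: "complex mat \<Rightarrow> complex mat" where
  "mp_inv A = (THE B. penrose A B)"

definition E_mat :: "complex mat \<Rightarrow> complex mat" where
  "E_mat A = 1\<^sub>m (dim_row A) - A * mp_inv A"

definition F_mat :: "complex mat \<Rightarrow> complex mat" where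
  "F_mat A = 1\<^sub>m (dim_col A) - mp_inv A * A"

end

theory Submission
  imports Defs
begin

declare [[show_types=false]]
type_synonym cm = "complex mat"


lemma adj_eq: "mat_adjoint A = mat (dim_col A) (dim_row A) (\<lambda>(i,j). cnj (A $$ (j,i)))"
  unfolding mat_adjoint_def
  by (rule eq_matI) (auto simp: mat_of_rows_def cols_def)

lemma adj_dims[simp]: "dim_row (mat_adjoint A) = dim_col A" "dim_col (mat_adjoint A) = dim_row A"
  for A :: "complex mat"
  by (auto simp: adj_eq)

lemma adj_index[simp]: "i < dim_col A \<Longrightarrow> j < dim_row A \<Longrightarrow> mat_adjoint A $$ (i,j) = cnj (A $$ (j,i))"
  for A :: cm
  by (auto simp: adj_eq)

lemma adj_carrier[simp]: "A \<in> carrier_mat m n \<Longrightarrow> mat_adjoint A \<in> carrier_mat n m"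
  for A :: cm
  by auto

lemma adj_adj[simp]: "mat_adjoint (mat_adjoint A) = A"
  for A :: cm
  by (rule eq_matI) auto

lemma adj_mult[simp]: "dim_col A = dim_row B \<Longrightarrow> mat_adjoint (A * B) = mat_adjoint B * mat_adjoint A"
  for A   B :: cm
  by (rule eq_matI) (auto simp: scalar_prod_def cnj_sum mult.commute)

lemma adj_add[simp]: "dim_row A = dim_row B \<Longrightarrow> dim_col A = dim_col B \<Longrightarrow> mat_adjoint (A + B) = mat_adjoint A + mat_adjoint B"
  for A   B :: cm
  by (rule eq_matI) auto

lemma adj_minus[simp]: "dim_row A = dim_row B \<Longrightarrow> dim_col A = dim_col B \<Longrightarrow> mat_adjoint (A - B) = mat_adjoint A - mat_adjoint B"
  for A   B :: cm
  by (rule eq_matI) auto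

lemma adj_uminus[simp]: "mat_adjoint (- A) = - mat_adjoint A"
  for A :: cm
  by (rule eq_matI) auto

lemma adj_one[simp]: "mat_adjoint (1\<^sub>m n :: cm) = 1\<^sub>m n"
  by (rule eq_matI) auto

lemma adj_zero[simp]: "mat_adjoint (0\<^sub>m n m :: cm) = 0\<^sub>m m n"
  by (rule eq_matI) auto

lemma adj_fb[simp]: "dim_row B = dim_row A \<Longrightarrow> dim_row D = dim_row C \<Longrightarrow> dim_col C = dim_col A \<Longrightarrow> dim_col D = dim_col B \<Longrightarrow>
  mat_adjoint (four_block_mat A B C D) = four_block_mat (mat_adjoint A) (mat_adjoint C) (mat_adjoint B) (mat_adjoint D)"
  for A   B   C   D :: cm
  by (rule eq_matI) auto


lemma assoc': "dim_col A = dim_row B \<Longrightarrow> dim_col B = dim_row C \<Longrightarrow> A * B * C = A * (B * C)"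
  for A :: "'a::semiring_0 mat"
  by (rule assoc_mult_mat[of A "dim_row A" "dim_col A" B "dim_col B" C "dim_col C"]) auto

lemma one_l: "dim_row A = n \<Longrightarrow> 1\<^sub>m n * A = (A :: cm)"
  by (rule left_mult_one_mat[of _ n "dim_col A"]) auto
lemma one_r: "dim_col A = n \<Longrightarrow> A * 1\<^sub>m n = (A :: cm)"
  by (rule right_mult_one_mat[of _ "dim_row A" n]) auto
lemma zero_l: "dim_row A = k \<Longrightarrow> 0\<^sub>m n k * A = 0\<^sub>m n (dim_col A)" for A :: cm
  by (rule eq_matI) auto
lemma zero_r: "dim_col A = k \<Longrightarrow> A * 0\<^sub>m k n = 0\<^sub>m (dim_row A) n" for A :: cm
  by (rule eq_matI) auto
lemma add_zero_r: "dim_row A = n \<Longrightarrow> dim_col A = m \<Longrightarrow> A + 0\<^sub>m n m = (A :: cm)"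
  by (rule eq_matI) auto
lemma add_zero_l: "dim_row A = n \<Longrightarrow> dim_col A = m \<Longrightarrow> 0\<^sub>m n m + A = (A :: cm)"
  by (rule eq_matI) auto
lemma minus_zero_r: "dim_row A = n \<Longrightarrow> dim_col A = m \<Longrightarrow> A - 0\<^sub>m n m = (A :: cm)"
  by (rule eq_matI) auto
lemma minus_zero_l: "dim_row A = n \<Longrightarrow> dim_col A = m \<Longrightarrow> 0\<^sub>m n m - A = - (A :: cm)"
  by (rule eq_matI) auto
lemma uminus_l: "dim_col A = dim_row B \<Longrightarrow> (- A) * B = - (A * B :: cm)"
  by (rule eq_matI) (auto simp: scalar_prod_def sum_negf)
lemma uminus_r: "dim_col A = dim_row B \<Longrightarrow> A * (- B) = - (A * B :: cm)"
  by (rule eq_matI) (auto simp: scalar_prod_def sum_negf)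
lemma uminus_uminus': "- (- A) = (A :: cm)"
  by (rule eq_matI) auto
lemma uminus_zero': "- (0\<^sub>m n m) = (0\<^sub>m n m :: cm)"
  by (rule eq_matI) auto
lemma add_uminus_self: "A + (- A) = 0\<^sub>m (dim_row A) (dim_col A)" for A :: cm
  by (rule eq_matI) auto
lemma uminus_add_self: "(- A) + A = 0\<^sub>m (dim_row A) (dim_col A)" for A :: cm
  by (rule eq_matI) auto
lemma minus_self': "A - A = 0\<^sub>m (dim_row A) (dim_col A)" for A :: cm
  by (rule eq_matI) auto
lemma one_split: "1\<^sub>m (a + b) = (four_block_mat (1\<^sub>m a) (0\<^sub>m a b) (0\<^sub>m b a) (1\<^sub>m b) :: cm)"
  by (rule eq_matI) auto

lemma mult_fb: "dim_row B1 = dim_row A1 \<Longrightarrow> dim_row D1 = dim_row C1 \<Longrightarrow> dim_col C1 = dim_col A1 \<Longrightarrow> dim_col D1 = dim_col B1 \<Longrightarrow>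
  dim_row B2 = dim_row A2 \<Longrightarrow> dim_row D2 = dim_row C2 \<Longrightarrow> dim_col C2 = dim_col A2 \<Longrightarrow> dim_col D2 = dim_col B2 \<Longrightarrow>
  dim_col A1 = dim_row A2 \<Longrightarrow> dim_col B1 = dim_row C2 \<Longrightarrow>
  four_block_mat A1 B1 C1 D1 * four_block_mat A2 B2 C2 D2
  = four_block_mat (A1 * A2 + B1 * C2) (A1 * B2 + B1 * D2) (C1 * A2 + D1 * C2) (C1 * B2 + D1 * D2)"
  for A1 B1 C1 D1 A2 B2 C2 D2 :: cm
  by (rule mult_four_block_mat) (auto intro!: carrier_matI)

lemma add_fb: "dim_row B1 = dim_row A1 \<Longrightarrow> dim_row D1 = dim_row C1 \<Longrightarrow> dim_col C1 = dim_col A1 \<Longrightarrow> dim_col D1 = dim_col B1 \<Longrightarrow>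
  dim_row A2 = dim_row A1 \<Longrightarrow> dim_row D2 = dim_row D1 \<Longrightarrow> dim_col A2 = dim_col A1 \<Longrightarrow> dim_col D2 = dim_col D1 \<Longrightarrow>
  dim_row B2 = dim_row A1 \<Longrightarrow> dim_col B2 = dim_col D1 \<Longrightarrow> dim_row C2 = dim_row D1 \<Longrightarrow> dim_col C2 = dim_col A1 \<Longrightarrow>
  four_block_mat A1 B1 C1 D1 + four_block_mat A2 B2 C2 D2
  = four_block_mat (A1 + A2) (B1 + B2) (C1 + C2) (D1 + D2)"
  for A1 B1 C1 D1 A2 B2 C2 D2 :: cm
  by (rule eq_matI) auto

lemma minus_fb: "dim_row B1 = dim_row A1 \<Longrightarrow> dim_row D1 = dim_row C1 \<Longrightarrow> dim_col C1 = dim_col A1 \<Longrightarrow> dim_col D1 = dim_col B1 \<Longrightarrow>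
  dim_row A2 = dim_row A1 \<Longrightarrow> dim_row D2 = dim_row D1 \<Longrightarrow> dim_col A2 = dim_col A1 \<Longrightarrow> dim_col D2 = dim_col D1 \<Longrightarrow>
  dim_row B2 = dim_row A1 \<Longrightarrow> dim_col B2 = dim_col D1 \<Longrightarrow> dim_row C2 = dim_row D1 \<Longrightarrow> dim_col C2 = dim_col A1 \<Longrightarrow>
  four_block_mat A1 B1 C1 D1 - four_block_mat A2 B2 C2 D2
  = four_block_mat (A1 - A2) (B1 - B2) (C1 - C2) (D1 - D2)"
  for A1 B1 C1 D1 A2 B2 C2 D2 :: cm
  by (rule eq_matI) auto

lemma one_add_fb: "dim_row A = a \<Longrightarrow> dim_col A = a \<Longrightarrow> dim_row D = b \<Longrightarrow> dim_col D = b \<Longrightarrow>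
  dim_row B = a \<Longrightarrow> dim_col B = b \<Longrightarrow> dim_row C = b \<Longrightarrow> dim_col C = a \<Longrightarrow>
  1\<^sub>m (a + b) + four_block_mat A B C D = four_block_mat (1\<^sub>m a + A) B C (1\<^sub>m b + D)" for A B C D :: cm
  by (rule eq_matI) auto
lemma fb_minus_one: "dim_row A = a \<Longrightarrow> dim_col A = a \<Longrightarrow> dim_row D = b \<Longrightarrow> dim_col D = b \<Longrightarrow>
  dim_row B = a \<Longrightarrow> dim_col B = b \<Longrightarrow> dim_row C = b \<Longrightarrow> dim_col C = a \<Longrightarrow>
  four_block_mat A B C D - 1\<^sub>m (a + b) = four_block_mat (A - 1\<^sub>m a) B C (D - 1\<^sub>m b)" for A B C D :: cm
  by (rule eq_matI) auto
lemma one_minus_fb: "dim_row A = a \<Longrightarrow> dim_col A = a \<Longrightarrow> dim_row D = b \<Longrightarrow> dim_col D = b \<Longrightarrow>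
  dim_row B = a \<Longrightarrow> dim_col B = b \<Longrightarrow> dim_row C = b \<Longrightarrow> dim_col C = a \<Longrightarrow>
  1\<^sub>m (a + b) - four_block_mat A B C D = four_block_mat (1\<^sub>m a - A) (- B) (- C) (1\<^sub>m b - D)" for A B C D :: cm
  by (rule eq_matI) auto
lemma minus_one_self: "(1\<^sub>m a :: cm) - 1\<^sub>m a = 0\<^sub>m a a" by (rule eq_matI) auto
lemma zero_minus_one: "(0\<^sub>m a a :: cm) - 1\<^sub>m a = - 1\<^sub>m a" by (rule eq_matI) auto
lemma one_minus_zero: "(1\<^sub>m a :: cm) - 0\<^sub>m a a = 1\<^sub>m a" by (rule eq_matI) auto

lemmas mm = assoc' one_l one_r zero_l zero_r add_zero_r add_zero_l minus_zero_r minus_zero_l uminus_l uminus_r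
  uminus_uminus' uminus_zero' add_uminus_self uminus_add_self minus_self' mult_fb add_fb minus_fb
  one_add_fb fb_minus_one one_minus_fb minus_one_self


lemma mat_inv_eq:
  assumes A: "A \<in> carrier_mat n n" and B: "B \<in> carrier_mat n n" and AB: "A * B = 1\<^sub>m n" and BA: "B * A = 1\<^sub>m n"
  shows "mat_inv A = B"
  unfolding mat_inv_def
proof (rule the_equality)
  show "B \<in> carrier_mat (dim_row A) (dim_row A) \<and> A * B = 1\<^sub>m (dim_row A) \<and> B * A = 1\<^sub>m (dim_row A)"
    using A B AB BA by auto
  fix C assume C: "C \<in> carrier_mat (dim_row A) (dim_row A) \<and> A * C = 1\<^sub>m (dim_row A) \<and> C * A = 1\<^sub>m (dim_row A)"
  have Cc: "C \<in> carrier_mat n n" and CA: "C * A = 1\<^sub>m n" using C A by auto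
  have "C = C * (A * B)" using Cc AB by (simp add: mm)
  also have "\<dots> = (C * A) * B" using Cc A B by (simp add: assoc_mult_mat)
  also have "\<dots> = B" using CA B by (simp add: mm)
  finally show "C = B" .
qed

lemma penrose_unique:
  assumes "penrose A B" "penrose A C"
  shows "B = C"
proof -
  define m n where "m = dim_row A" and "n = dim_col A"
  have A: "A \<in> carrier_mat m n" by (auto simp: m_def n_def)
  have B: "B \<in> carrier_mat n m" and C: "C \<in> carrier_mat n m" using assms by (auto simp: penrose_def m_def n_def)
  note P = assms[unfolded penrose_def]
  have 1: "A * B * A = A" "B * A * B = B" "mat_adjoint (A * B) = A * B" "mat_adjoint (B * A) = B * A" using P by auto
  have 2: "A * C * A = A" "C * A * C = C" "mat_adjoint (A * C) = A * C" "mat_adjoint (C * A) = C * A" using P by auto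
  have "B = B * (A * B)" using 1 A B by (simp add: mm)
  also have "\<dots> = B * mat_adjoint (A * B)" using 1 by simp
  also have "\<dots> = B * mat_adjoint (A * C * A * B)" using 2 by simp
  also have "\<dots> = B * (mat_adjoint (A * B) * mat_adjoint (A * C))" using A B C by (simp add: mm)
  also have "\<dots> = B * ((A * B) * (A * C))" using 1 2 by simp
  also have "\<dots> = (B * A * B) * A * C" using A B C by (simp add: mm)
  finally have eB: "B = B * A * C" using 1 by simp
  have "C = (C * A) * C" using 2 A C by (simp add: mm)
  also have "\<dots> = mat_adjoint (C * A) * C" using 2 by simp
  also have "\<dots> = mat_adjoint (C * A * B * A) * C" using 1 A B C by (simp add: mm)
  also have "\<dots> = (mat_adjoint (B * A) * mat_adjoint (C * A)) * C" using A B C by (simp add: mm)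
  also have "\<dots> = B * A * (C * A * C)" using 1 2 A B C by (simp add: mm)
  finally have eC: "C = B * A * C" using 2 by simp
  show ?thesis using eB eC by simp
qed

lemma mp_inv_eq: "penrose A B \<Longrightarrow> mp_inv A = B"
  unfolding mp_inv_def by (rule the_equality) (auto intro: penrose_unique)




lemma cancel: "L * S = 1\<^sub>m k \<Longrightarrow> dim_col L = dim_row S \<Longrightarrow> dim_col S = dim_row W \<Longrightarrow> dim_row W = k \<Longrightarrow> L * (S * W) = (W :: cm)"
  by (metis assoc' one_l)

lemma herm_inv:
  fixes S Si :: cm
  assumes S: "S \<in> carrier_mat k k" and Sh: "mat_adjoint S = S" and Si: "Si \<in> carrier_mat k k"
    and e1: "S * Si = 1\<^sub>m k" and e2: "Si * S = 1\<^sub>m k"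
  shows "mat_adjoint Si = Si"
proof -
  have "mat_adjoint Si * S = 1\<^sub>m k"
  proof -
    have "mat_adjoint (S * Si) = 1\<^sub>m k" using e1 by simp
    thus ?thesis using S Si Sh by simp
  qed
  hence "mat_adjoint Si = mat_adjoint Si * (S * Si)" using e1 Si by (simp add: mm)
  also have "\<dots> = Si" using cancel[OF \<open>mat_adjoint Si * S = 1\<^sub>m k\<close>] S Si by simp
  finally show ?thesis .
qed

lemma fullrank_penrose:
  fixes F B H Fi Gi Bi :: cm
  assumes F: "F \<in> carrier_mat m k" and B: "B \<in> carrier_mat k k" and H: "H \<in> carrier_mat k n"
    and Fi: "Fi \<in> carrier_mat k k" "mat_adjoint F * F * Fi = 1\<^sub>m k" "Fi * (mat_adjoint F * F) = 1\<^sub>m k"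
    and Gi: "Gi \<in> carrier_mat k k" "H * mat_adjoint H * Gi = 1\<^sub>m k" "Gi * (H * mat_adjoint H) = 1\<^sub>m k"
    and Bi: "Bi \<in> carrier_mat k k" "B * Bi = 1\<^sub>m k" "Bi * B = 1\<^sub>m k"
  shows "penrose (F * B * H) (mat_adjoint H * Gi * Bi * Fi * mat_adjoint F)"
proof -
  have Fa: "mat_adjoint Fi = Fi"
    by (rule herm_inv[OF _ _ Fi(1)]) (use F Fi in \<open>auto simp: mm\<close>)
  have Ga: "mat_adjoint Gi = Gi"
    by (rule herm_inv[OF _ _ Gi(1)]) (use H Gi in \<open>auto simp: mm\<close>)
  have Fi': "mat_adjoint F * (F * (Fi * W)) = W" if "dim_row W = k" for W
    using cancel[OF Fi(2), of W] Fi F that by (simp add: mm)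
  have Fi'': "Fi * (mat_adjoint F * (F * W)) = W" if "dim_row W = k" for W
    using cancel[OF Fi(3), of W] Fi F that by (simp add: mm)
  have Gi'': "Gi * (H * (mat_adjoint H * W)) = W" if "dim_row W = k" for W
    using cancel[OF Gi(3), of W] Gi H that by (simp add: mm)
  have Gi': "H * (mat_adjoint H * (Gi * W)) = W" if "dim_row W = k" for W
    using cancel[OF Gi(2), of W] Gi H that by (simp add: mm)
  have Bi': "B * (Bi * W) = W" "Bi * (B * W) = W" if "dim_row W = k" for W
    using cancel[OF Bi(2), of W] cancel[OF Bi(3), of W] Bi B that by (simp add: mm)+
  let ?A = "F * B * H" and ?Z = "mat_adjoint H * Gi * Bi * Fi * mat_adjoint F"
  have AZ: "?A * ?Z = F * (Fi * mat_adjoint F)"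
    using F B H Fi Gi Bi by (simp add: mm Gi' Bi')
  have ZA: "?Z * ?A = mat_adjoint H * (Gi * H)"
    using F B H Fi Gi Bi by (simp add: mm Fi'' Bi')
  show ?thesis unfolding penrose_def
  proof (intro conjI)
    show "?Z \<in> carrier_mat (dim_col ?A) (dim_row ?A)" using F B H Fi Gi Bi by auto
    show "?A * ?Z * ?A = ?A" unfolding AZ using F B H Fi Gi Bi by (simp add: mm Fi'')
    show "?Z * ?A * ?Z = ?Z" unfolding ZA using F B H Fi Gi Bi by (simp add: mm Gi'')
    show "mat_adjoint (?A * ?Z) = ?A * ?Z" unfolding AZ using F B H Fi Gi Bi Fa by (simp add: mm)
    show "mat_adjoint (?Z * ?A) = ?Z * ?A" unfolding ZA using F B H Fi Gi Bi Ga by (simp add: mm)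
  qed
qed




lemma inv_exists:
  fixes A :: cm
  assumes A: "A \<in> carrier_mat n n" and d: "det A \<noteq> 0"
  shows "\<exists>B. B \<in> carrier_mat n n \<and> A * B = 1\<^sub>m n \<and> B * A = 1\<^sub>m n"
proof -
  have "A \<in> Units (ring_mat TYPE(complex) n undefined)" by (rule det_non_zero_imp_unit[OF A d])
  thus ?thesis unfolding Units_def by (auto simp: ring_mat_def)
qed

lemma invertible_det:
  fixes A :: cm
  assumes A: "A \<in> carrier_mat n n" and i: "invertible_mat A"
  shows "det A \<noteq> 0"
proof -
  obtain B where AB: "A * B = 1\<^sub>m n" and BA: "B * A = 1\<^sub>m (dim_row B)"
    using i A unfolding invertible_mat_def inverts_mat_def by auto
  have "dim_col B = n" using arg_cong[OF AB, of dim_col] by simp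
  moreover have "dim_row B = n" using arg_cong[OF BA, of dim_row] arg_cong[OF BA, of dim_col] A by simp
  ultimately have B: "B \<in> carrier_mat n n" by auto
  have "det A * det B = 1" using det_mult[OF A B] AB by simp
  thus ?thesis by auto
qed

lemma adj_inner:
  fixes K :: cm
  assumes K: "K \<in> carrier_mat p r" and v: "v \<in> carrier_vec r" and w: "w \<in> carrier_vec p"
  shows "(mat_adjoint K *\<^sub>v w) \<bullet>c v = w \<bullet>c (K *\<^sub>v v)"
proof -
  have L: "(mat_adjoint K *\<^sub>v w) \<bullet>c v = (\<Sum>i<r. \<Sum>l<p. cnj (K $$ (l,i)) * w $ l * cnj (v $ i))"
    using K v w by (simp add: scalar_prod_def sum_distrib_right atLeast0LessThan)
  have R: "w \<bullet>c (K *\<^sub>v v) = (\<Sum>l<p. \<Sum>i<r. cnj (K $$ (l,i)) * w $ l * cnj (v $ i))"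
    using K v w by (simp add: scalar_prod_def sum_distrib_left atLeast0LessThan cnj_sum mult_ac)
  show ?thesis unfolding L R by (rule sum.swap)
qed


lemma posdef_det:
  fixes K :: cm
  assumes K: "K \<in> carrier_mat p r"
  shows "det (1\<^sub>m r + mat_adjoint K * K) \<noteq> 0"
proof
  assume "det (1\<^sub>m r + mat_adjoint K * K) = 0"
  then obtain v where v: "v \<in> carrier_vec r" "v \<noteq> 0\<^sub>v r" and e: "(1\<^sub>m r + mat_adjoint K * K) *\<^sub>v v = 0\<^sub>v r"
  proof -
    have "1\<^sub>m r + mat_adjoint K * K \<in> carrier_mat r r" using K by auto
    thus ?thesis using that det_0_iff_vec_prod_zero_field[of "1\<^sub>m r + mat_adjoint K * K" r]
      \<open>det (1\<^sub>m r + mat_adjoint K * K) = 0\<close> by blast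
  qed
  have "(1\<^sub>m r + mat_adjoint K * K) *\<^sub>v v = v + mat_adjoint K *\<^sub>v (K *\<^sub>v v)"
    using K v by (subst add_mult_distrib_mat_vec[of _ r r]) (auto simp: assoc_mult_mat_vec[of _ r p _ r])
  with e have e2: "v + mat_adjoint K *\<^sub>v (K *\<^sub>v v) = 0\<^sub>v r" by simp
  have "(v + mat_adjoint K *\<^sub>v (K *\<^sub>v v)) \<bullet>c v = v \<bullet>c v + (K *\<^sub>v v) \<bullet>c (K *\<^sub>v v)"
  proof -
    have c1: "K *\<^sub>v v \<in> carrier_vec p" using K v by auto
    have c2: "mat_adjoint K *\<^sub>v (K *\<^sub>v v) \<in> carrier_vec r"
      by (rule mult_mat_vec_carrier[OF _ c1]) (use K in auto)
    show ?thesis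
      by (subst add_scalar_prod_distrib[of _ r]) (use v c1 c2 adj_inner[OF K v(1) c1] in auto)
  qed
  hence "v \<bullet>c v + (K *\<^sub>v v) \<bullet>c (K *\<^sub>v v) = 0" using e2 v by simp
  moreover have "v \<bullet>c v \<ge> 0" "(K *\<^sub>v v) \<bullet>c (K *\<^sub>v v) \<ge> 0" by auto
  ultimately have "v \<bullet>c v = 0" by (metis add_nonneg_eq_0_iff)
  with v show False by simp
qed




lemma cancelW: "L * S = 1\<^sub>m k \<Longrightarrow> dim_col L = k \<Longrightarrow> dim_row S = k \<Longrightarrow> dim_row W = k \<Longrightarrow> L * (S * W) = (W :: cm)"
  by (metis assoc' one_l index_mult_mat(3) index_one_mat(3))

locale blk =
  fixes S Si X1 X1i X2 X4 X4i Y1 Y1i Y3 Y4 Y4i :: cm and r p q :: nat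
  assumes S: "S \<in> carrier_mat r r" "Si \<in> carrier_mat r r" "S * Si = 1\<^sub>m r" "Si * S = 1\<^sub>m r"
    and X1: "X1 \<in> carrier_mat r r" "X1i \<in> carrier_mat r r" "X1 * X1i = 1\<^sub>m r" "X1i * X1 = 1\<^sub>m r"
    and X4: "X4 \<in> carrier_mat p p" "X4i \<in> carrier_mat p p" "X4 * X4i = 1\<^sub>m p" "X4i * X4 = 1\<^sub>m p"
    and Y1: "Y1 \<in> carrier_mat r r" "Y1i \<in> carrier_mat r r" "Y1 * Y1i = 1\<^sub>m r" "Y1i * Y1 = 1\<^sub>m r"
    and Y4: "Y4 \<in> carrier_mat q q" "Y4i \<in> carrier_mat q q" "Y4 * Y4i = 1\<^sub>m q" "Y4i * Y4 = 1\<^sub>m q"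
    and X2: "X2 \<in> carrier_mat p r" and Y3: "Y3 \<in> carrier_mat r q"
begin

lemma dims[simp]:
  "dim_row S = r" "dim_col S = r" "dim_row Si = r" "dim_col Si = r"
  "dim_row X1 = r" "dim_col X1 = r" "dim_row X1i = r" "dim_col X1i = r"
  "dim_row X4 = p" "dim_col X4 = p" "dim_row X4i = p" "dim_col X4i = p"
  "dim_row Y1 = r" "dim_col Y1 = r" "dim_row Y1i = r" "dim_col Y1i = r"
  "dim_row Y4 = q" "dim_col Y4 = q" "dim_row Y4i = q" "dim_col Y4i = q"
  "dim_row X2 = p" "dim_col X2 = r" "dim_row Y3 = r" "dim_col Y3 = q"
  using S X1 X4 Y1 Y4 X2 Y3 by auto

lemma invs[simp]:
  "S * Si = 1\<^sub>m r" "Si * S = 1\<^sub>m r" "X1 * X1i = 1\<^sub>m r" "X1i * X1 = 1\<^sub>m r"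
  "X4 * X4i = 1\<^sub>m p" "X4i * X4 = 1\<^sub>m p" "Y1 * Y1i = 1\<^sub>m r" "Y1i * Y1 = 1\<^sub>m r"
  "Y4 * Y4i = 1\<^sub>m q" "Y4i * Y4 = 1\<^sub>m q"
  using S X1 X4 Y1 Y4 by auto

lemma invsW[simp]:
  "dim_row W = r \<Longrightarrow> S * (Si * W) = W" "dim_row W = r \<Longrightarrow> Si * (S * W) = W"
  "dim_row W = r \<Longrightarrow> X1 * (X1i * W) = W" "dim_row W = r \<Longrightarrow> X1i * (X1 * W) = W"
  "dim_row W = p \<Longrightarrow> X4 * (X4i * W) = W" "dim_row W = p \<Longrightarrow> X4i * (X4 * W) = W"
  "dim_row W = r \<Longrightarrow> Y1 * (Y1i * W) = W" "dim_row W = r \<Longrightarrow> Y1i * (Y1 * W) = W"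
  "dim_row W = q \<Longrightarrow> Y4 * (Y4i * W) = W" "dim_row W = q \<Longrightarrow> Y4i * (Y4 * W) = W"
  by (rule cancelW; simp)+

definition "Xt = four_block_mat X1 (0\<^sub>m r p) X2 X4"
definition "Xti = four_block_mat X1i (0\<^sub>m r p) (- (X4i * X2 * X1i)) X4i"
definition "Yt = four_block_mat Y1 Y3 (0\<^sub>m q r) Y4"
definition "Yti = four_block_mat Y1i (- (Y1i * Y3 * Y4i)) (0\<^sub>m q r) Y4i"
definition "D = four_block_mat S (0\<^sub>m r q) (0\<^sub>m p r) (0\<^sub>m p q)"
definition "Dp = four_block_mat Si (0\<^sub>m r p) (0\<^sub>m q r) (0\<^sub>m q p)"
definition "Et = (four_block_mat (0\<^sub>m r r) (0\<^sub>m r p) (0\<^sub>m p r) (1\<^sub>m p) :: cm)"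
definition "Ft = (four_block_mat (0\<^sub>m r r) (0\<^sub>m r q) (0\<^sub>m q r) (1\<^sub>m q) :: cm)"


lemma Xinv: "Xt * Xti = 1\<^sub>m (r + p)" "Xti * Xt = 1\<^sub>m (r + p)"
  unfolding Xt_def Xti_def by (simp_all add: mm)
lemma Yinv: "Yt * Yti = 1\<^sub>m (r + q)" "Yti * Yt = 1\<^sub>m (r + q)"
  unfolding Yt_def Yti_def by (simp_all add: mm)
lemma Dpen: "penrose D Dp"
  unfolding penrose_def
proof (intro conjI)
  show "Dp \<in> carrier_mat (dim_col D) (dim_row D)" unfolding D_def Dp_def by (auto intro!: carrier_matI)
qed (simp_all add: mm D_def Dp_def)
lemma Eeq: "1\<^sub>m (r + p) - D * Dp = Et"
  unfolding Et_def D_def Dp_def by (simp add: mm)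
lemma Feq: "1\<^sub>m (r + q) - Dp * D = Ft"
  unfolding Ft_def D_def Dp_def by (simp add: mm)
lemma Rt_eq: "Xt * Et * Xti * (Et - 1\<^sub>m (r + p)) = four_block_mat (0\<^sub>m r r) (0\<^sub>m r p) (X2 * X1i) (0\<^sub>m p p)"
  unfolding Xt_def Xti_def Et_def by (simp add: mm)
lemma Lt_eq: "(Ft - 1\<^sub>m (r + q)) * Yti * Ft * Yt = four_block_mat (0\<^sub>m r r) (Y1i * Y3) (0\<^sub>m q r) (0\<^sub>m q q)"
  unfolding Yt_def Yti_def Ft_def by (simp add: mm)
end

lemma fb_zero_dim: "dim_row A = a \<Longrightarrow> dim_col A = b \<Longrightarrow> four_block_mat A (0\<^sub>m a 0) (0\<^sub>m 0 b) (0\<^sub>m 0 0) = (A :: cm)"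
  by (rule eq_matI) auto
lemma mult_fb_r0: "dim_row M = dim_col M \<Longrightarrow> dim_row C = 0 \<Longrightarrow> dim_row D = 0 \<Longrightarrow> dim_col M = dim_row A \<Longrightarrow> dim_row B = dim_row A \<Longrightarrow>
   dim_col C = dim_col A \<Longrightarrow> dim_col D = dim_col B \<Longrightarrow>
   M * four_block_mat A B C D = four_block_mat (M * A) (M * B) (0\<^sub>m 0 (dim_col A)) (0\<^sub>m 0 (dim_col B))" for M A B C D :: cm
  by (rule eq_matI) (auto simp: scalar_prod_def)
lemma mult_fb_c0: "dim_row M = dim_col M \<Longrightarrow> dim_col B = 0 \<Longrightarrow> dim_col D = 0 \<Longrightarrow> dim_row M = dim_col A \<Longrightarrow> dim_row B = dim_row A \<Longrightarrow>
   dim_col C = dim_col A \<Longrightarrow> dim_row D = dim_row C \<Longrightarrow>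
   four_block_mat A B C D * M = four_block_mat (A * M) (0\<^sub>m (dim_row A) 0) (C * M) (0\<^sub>m (dim_row C) 0)" for M A B C D :: cm
  by (rule eq_matI) (auto simp: scalar_prod_def)

lemmas mm2 = mm fb_zero_dim mult_fb_r0 mult_fb_c0

locale blk2 = blk +
  fixes Fi Gi :: cm
  assumes Fi: "Fi \<in> carrier_mat r r" "(1\<^sub>m r + mat_adjoint (X2 * X1i) * (X2 * X1i)) * Fi = 1\<^sub>m r"
     "Fi * (1\<^sub>m r + mat_adjoint (X2 * X1i) * (X2 * X1i)) = 1\<^sub>m r"
  and Gi: "Gi \<in> carrier_mat r r" "(1\<^sub>m r + (Y1i * Y3) * mat_adjoint (Y1i * Y3)) * Gi = 1\<^sub>m r"
     "Gi * (1\<^sub>m r + (Y1i * Y3) * mat_adjoint (Y1i * Y3)) = 1\<^sub>m r"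
begin

lemma dims2[simp]: "dim_row Fi = r" "dim_col Fi = r" "dim_row Gi = r" "dim_col Gi = r"
  using Fi Gi by auto

lemma FiGi[simp]:
  "(1\<^sub>m r + mat_adjoint X1i * (mat_adjoint X2 * (X2 * X1i))) * Fi = 1\<^sub>m r"
  "Fi * (1\<^sub>m r + mat_adjoint X1i * (mat_adjoint X2 * (X2 * X1i))) = 1\<^sub>m r"
  "(1\<^sub>m r + Y1i * (Y3 * (mat_adjoint Y3 * mat_adjoint Y1i))) * Gi = 1\<^sub>m r"
  "Gi * (1\<^sub>m r + Y1i * (Y3 * (mat_adjoint Y3 * mat_adjoint Y1i))) = 1\<^sub>m r"
  using Fi Gi by (simp_all add: mm)

lemma FiGiW[simp]:
  "dim_row W = r \<Longrightarrow> (1\<^sub>m r + mat_adjoint X1i * (mat_adjoint X2 * (X2 * X1i))) * (Fi * W) = W"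
  "dim_row W = r \<Longrightarrow> Fi * ((1\<^sub>m r + mat_adjoint X1i * (mat_adjoint X2 * (X2 * X1i))) * W) = W"
  "dim_row W = r \<Longrightarrow> (1\<^sub>m r + Y1i * (Y3 * (mat_adjoint Y3 * mat_adjoint Y1i))) * (Gi * W) = W"
  "dim_row W = r \<Longrightarrow> Gi * ((1\<^sub>m r + Y1i * (Y3 * (mat_adjoint Y3 * mat_adjoint Y1i))) * W) = W"
  by (rule cancelW; simp)+

definition "Rt = four_block_mat (0\<^sub>m r r) (0\<^sub>m r p) (X2 * X1i) (0\<^sub>m p p)"
definition "Lt = four_block_mat (0\<^sub>m r r) (Y1i * Y3) (0\<^sub>m q r) (0\<^sub>m q q)"
definition "Pt = four_block_mat Fi (0\<^sub>m r p) (0\<^sub>m p r) (1\<^sub>m p)"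
definition "Qt = four_block_mat Gi (0\<^sub>m r q) (0\<^sub>m q r) (1\<^sub>m q)"

lemma Pinv: "(1\<^sub>m (r + p) + mat_adjoint Rt * Rt) * Pt = 1\<^sub>m (r + p)" "Pt * (1\<^sub>m (r + p) + mat_adjoint Rt * Rt) = 1\<^sub>m (r + p)"
  unfolding Rt_def Pt_def by (simp_all add: mm)
lemma Qinv: "(1\<^sub>m (r + q) + Lt * mat_adjoint Lt) * Qt = 1\<^sub>m (r + q)" "Qt * (1\<^sub>m (r + q) + Lt * mat_adjoint Lt) = 1\<^sub>m (r + q)"
  unfolding Lt_def Qt_def by (simp_all add: mm)

definition "Fm = four_block_mat (1\<^sub>m r) (0\<^sub>m r 0) (X2 * X1i) (0\<^sub>m p 0)"
definition "Hm = four_block_mat (1\<^sub>m r) (Y1i * Y3) (0\<^sub>m 0 r) (0\<^sub>m 0 q)"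

lemma MtF: "Xt * D * Yt = Fm * (X1 * S * Y1) * Hm"
  unfolding Xt_def D_def Yt_def Fm_def Hm_def by (simp add: mm2)

lemma FF: "mat_adjoint Fm * Fm * Fi = 1\<^sub>m r" "Fi * (mat_adjoint Fm * Fm) = 1\<^sub>m r"
  unfolding Fm_def by (simp_all add: mm2)
lemma HH: "Hm * mat_adjoint Hm * Gi = 1\<^sub>m r" "Gi * (Hm * mat_adjoint Hm) = 1\<^sub>m r"
  unfolding Hm_def by (simp_all add: mm2)

lemma cand_eq: "mat_adjoint Hm * Gi * (Y1i * Si * X1i) * Fi * mat_adjoint Fm =
  (1\<^sub>m (r + q) + mat_adjoint Lt) * Qt * Yti * Dp * Xti * Pt * (1\<^sub>m (r + p) + mat_adjoint Rt)"
  unfolding Hm_def Fm_def Lt_def Qt_def Yti_def Dp_def Xti_def Pt_def Rt_def by (simp add: mm2)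

lemma block_penrose: "penrose (Xt * D * Yt)
  ((1\<^sub>m (r + q) + mat_adjoint Lt) * Qt * Yti * Dp * Xti * Pt * (1\<^sub>m (r + p) + mat_adjoint Rt))"
proof -
  have "penrose (Fm * (X1 * S * Y1) * Hm) (mat_adjoint Hm * Gi * (Y1i * Si * X1i) * Fi * mat_adjoint Fm)"
  proof (rule fullrank_penrose)
    show "Fm \<in> carrier_mat (r + p) r" unfolding Fm_def by (auto intro!: carrier_matI)
    show "Hm \<in> carrier_mat r (r + q)" unfolding Hm_def by (auto intro!: carrier_matI)
    show "X1 * S * Y1 \<in> carrier_mat r r" "Fi \<in> carrier_mat r r" "Gi \<in> carrier_mat r r"
      "Y1i * Si * X1i \<in> carrier_mat r r" by (auto intro!: carrier_matI)
    show "X1 * S * Y1 * (Y1i * Si * X1i) = 1\<^sub>m r" "Y1i * Si * X1i * (X1 * S * Y1) = 1\<^sub>m r"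
      by (simp_all add: mm)
  qed (use FF HH in auto)
  thus ?thesis unfolding MtF cand_eq .
qed

end



lemma rank_le_nr:
  fixes N :: cm
  assumes N: "N \<in> carrier_mat m n"
  shows "vec_space.rank m N \<le> m"
proof -
  interpret vs: vec_space "TYPE(complex)" m .
  have sub: "VectorSpace.subspace class_ring (vs.span (set (cols N))) vs.V"
    by (rule vs.span_is_subspace) (use N in \<open>auto simp: cols_def\<close>)
  have "vs.rank N \<le> vs.dim"
    unfolding vs.rank_def
    by (rule vs.subspace_dim[OF sub vs.fin_dim vs.fin_dim_span_cols[OF N]])
  thus ?thesis by (simp add: vs.dim_is_n)
qed

definition cj :: "cm \<Rightarrow> cm \<Rightarrow> cm \<Rightarrow> cm" where "cj U A W = U * A * mat_adjoint W"

lemma unitaryD: "unitary_mat U a \<Longrightarrow> dim_row U = a \<and> dim_col U = a \<and> mat_adjoint U * U = 1\<^sub>m a \<and> U * mat_adjoint U = 1\<^sub>m a"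
  unfolding unitary_mat_def by auto

lemma cj_mult: "unitary_mat W (dim_col A) \<Longrightarrow> dim_row B = dim_col A \<Longrightarrow> dim_col U = dim_row A \<Longrightarrow> dim_col Z = dim_col B \<Longrightarrow>
  cj U A W * cj W B Z = cj U (A * B) Z"
  unfolding cj_def
proof -
  assume W: "unitary_mat W (dim_col A)" and d: "dim_row B = dim_col A" "dim_col U = dim_row A" "dim_col Z = dim_col B"
  note w = unitaryD[OF W]
  have "U * A * mat_adjoint W * (W * B * mat_adjoint Z) = U * (A * (mat_adjoint W * (W * (B * mat_adjoint Z))))"
    using w d by (simp add: mm)
  also have "mat_adjoint W * (W * (B * mat_adjoint Z)) = B * mat_adjoint Z"
    using w d by (intro cancelW) auto
  finally show "U * A * mat_adjoint W * (W * B * mat_adjoint Z) = U * (A * B) * mat_adjoint Z"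
    using w d by (simp add: mm)
qed

lemma cj_add: "dim_col U = dim_row A \<Longrightarrow> dim_col W = dim_col A \<Longrightarrow> dim_row B = dim_row A \<Longrightarrow> dim_col B = dim_col A \<Longrightarrow>
  cj U A W + cj U B W = cj U (A + B) W"
  unfolding cj_def
proof -
  assume d: "dim_col U = dim_row A" "dim_col W = dim_col A" "dim_row B = dim_row A" "dim_col B = dim_col A"
  have "U * (A + B) = U * A + U * B"
    by (rule mult_add_distrib_mat[of U "dim_row U" "dim_row A" A "dim_col A" B]) (use d in \<open>auto intro!: carrier_matI\<close>)
  moreover have "(U * A + U * B) * mat_adjoint W = U * A * mat_adjoint W + U * B * mat_adjoint W"
    by (rule add_mult_distrib_mat[of _ "dim_row U" "dim_col A" _ _ "dim_row W"]) (use d in \<open>auto intro!: carrier_matI\<close>)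
  ultimately show "U * A * mat_adjoint W + U * B * mat_adjoint W = U * (A + B) * mat_adjoint W" by simp
qed

lemma cj_minus: "dim_col U = dim_row A \<Longrightarrow> dim_col W = dim_col A \<Longrightarrow> dim_row B = dim_row A \<Longrightarrow> dim_col B = dim_col A \<Longrightarrow>
  cj U A W - cj U B W = cj U (A - B) W"
  unfolding cj_def
proof -
  assume d: "dim_col U = dim_row A" "dim_col W = dim_col A" "dim_row B = dim_row A" "dim_col B = dim_col A"
  have "U * (A - B) = U * A - U * B"
    by (rule mult_minus_distrib_mat[of U "dim_row U" "dim_row A" A "dim_col A" B]) (use d in \<open>auto intro!: carrier_matI\<close>)
  moreover have "(U * A - U * B) * mat_adjoint W = U * A * mat_adjoint W - U * B * mat_adjoint W"
    by (rule minus_mult_distrib_mat[of _ "dim_row U" "dim_col A" _ _ "dim_row W"]) (use d in \<open>auto intro!: carrier_matI\<close>)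
  ultimately show "U * A * mat_adjoint W - U * B * mat_adjoint W = U * (A - B) * mat_adjoint W" by simp
qed

lemma cj_one: "unitary_mat U a \<Longrightarrow> cj U (1\<^sub>m a) U = 1\<^sub>m a"
  unfolding cj_def using unitaryD[of U a] by (simp add: mm)

lemma one_cj_add: "unitary_mat U a \<Longrightarrow> dim_row A = a \<Longrightarrow> dim_col A = a \<Longrightarrow> 1\<^sub>m a + cj U A U = cj U (1\<^sub>m a + A) U"
  by (subst cj_one[symmetric], assumption, rule cj_add) (auto dest: unitaryD)
lemma cj_minus_one: "unitary_mat U a \<Longrightarrow> dim_row A = a \<Longrightarrow> dim_col A = a \<Longrightarrow> cj U A U - 1\<^sub>m a = cj U (A - 1\<^sub>m a) U"
  by (subst cj_one[symmetric], assumption, rule cj_minus) (auto dest: unitaryD)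
lemma one_minus_cj: "unitary_mat U a \<Longrightarrow> dim_row A = a \<Longrightarrow> dim_col A = a \<Longrightarrow> 1\<^sub>m a - cj U A U = cj U (1\<^sub>m a - A) U"
  by (subst cj_one[symmetric], assumption, rule cj_minus) (auto dest: unitaryD)

lemma cj_adj: "dim_col U = dim_row A \<Longrightarrow> dim_col W = dim_col A \<Longrightarrow> mat_adjoint (cj U A W) = cj W (mat_adjoint A) U"
  unfolding cj_def by (simp add: mm)

lemma cj_dims[simp]: "dim_row (cj U A W) = dim_row U" "dim_col (cj U A W) = dim_row W"
  unfolding cj_def by auto

lemma penrose_cj:
  assumes U: "unitary_mat U (dim_row A)" and W: "unitary_mat W (dim_col A)" and P: "penrose A B"
  shows "penrose (cj U A W) (cj W B U)"
proof -
  note u = unitaryD[OF U] and w = unitaryD[OF W]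
  have B: "dim_row B = dim_col A" "dim_col B = dim_row A" using P unfolding penrose_def by auto
  have AB: "cj U A W * cj W B U = cj U (A * B) U" by (rule cj_mult) (use w u B U W in auto)
  have BA: "cj W B U * cj U A W = cj W (B * A) W" by (rule cj_mult) (use w u B U W in auto)
  have ABA: "cj U (A * B) U * cj U A W = cj U (A * B * A) W" by (rule cj_mult) (use w u B U W in auto)
  have BAB: "cj W (B * A) W * cj W B U = cj W (B * A * B) U" by (rule cj_mult) (use w u B U W in auto)
  show ?thesis unfolding penrose_def
  proof (intro conjI)
    show "cj W B U \<in> carrier_mat (dim_col (cj U A W)) (dim_row (cj U A W))" using u w by auto
    show "cj U A W * cj W B U * cj U A W = cj U A W" unfolding AB ABA using P unfolding penrose_def by simp
    show "cj W B U * cj U A W * cj W B U = cj W B U" unfolding BA BAB using P unfolding penrose_def by simp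
    show "mat_adjoint (cj U A W * cj W B U) = cj U A W * cj W B U" unfolding AB
      by (subst cj_adj) (use u B P in \<open>auto simp: penrose_def\<close>)
    show "mat_adjoint (cj W B U * cj U A W) = cj W B U * cj U A W" unfolding BA
      by (subst cj_adj) (use w B P in \<open>auto simp: penrose_def\<close>)
  qed
qed

lemma inv_cj:
  assumes U: "unitary_mat U a" and A: "A \<in> carrier_mat a a" and B: "B \<in> carrier_mat a a"
    and AB: "A * B = 1\<^sub>m a" and BA: "B * A = 1\<^sub>m a"
  shows "mat_inv (cj U A U) = cj U B U"
proof (rule mat_inv_eq)
  note u = unitaryD[OF U]
  show "cj U A U \<in> carrier_mat a a" "cj U B U \<in> carrier_mat a a" using u by auto
  have "cj U A U * cj U B U = cj U (A * B) U" by (rule cj_mult) (use u A B U in auto)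
  thus "cj U A U * cj U B U = 1\<^sub>m a" using AB cj_one[OF U] by simp
  have "cj U B U * cj U A U = cj U (B * A) U" by (rule cj_mult) (use u A B U in auto)
  thus "cj U B U * cj U A U = 1\<^sub>m a" using BA cj_one[OF U] by simp
qed




theorem corollary3p4:
  fixes N X Y U V \<Sigma> X1 X2 X4 Y1 Y3 Y4 :: "complex mat" and m n r :: nat
  assumes N: "N \<in> carrier_mat m n"
    and rk: "vec_space.rank m N = r"
    and Sig: "\<Sigma> \<in> carrier_mat r r" "diagonal_mat \<Sigma>"
      "\<forall>i<r. Im (\<Sigma> $$ (i,i)) = 0 \<and> Re (\<Sigma> $$ (i,i)) > 0"
    and U: "unitary_mat U m" and V: "unitary_mat V n"
    and svd: "N = U * four_block_mat \<Sigma> (0\<^sub>m r (n - r)) (0\<^sub>m (m - r) r) (0\<^sub>m (m - r) (n - r))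
                  * mat_adjoint V"
    and X: "X \<in> carrier_mat m m" "invertible_mat X"
    and Y: "Y \<in> carrier_mat n n" "invertible_mat Y"
    and Xb: "X1 \<in> carrier_mat r r" "X2 \<in> carrier_mat (m - r) r" "X4 \<in> carrier_mat (m - r) (m - r)"
      "X = U * four_block_mat X1 (0\<^sub>m r (m - r)) X2 X4 * mat_adjoint U"
    and Yb: "Y1 \<in> carrier_mat r r" "Y3 \<in> carrier_mat r (n - r)" "Y4 \<in> carrier_mat (n - r) (n - r)"
      "Y = V * four_block_mat Y1 Y3 (0\<^sub>m (n - r) r) Y4 * mat_adjoint V"
    and herm: "hermitian_mat (X * E_mat N)" "hermitian_mat (F_mat N * Y)"
  shows "let M = X * N * Y;
             R = X * E_mat N * mat_inv X * (E_mat N - 1\<^sub>m m);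
             L = (F_mat N - 1\<^sub>m n) * mat_inv Y * F_mat N * Y
         in mp_inv M =
              (1\<^sub>m n + mat_adjoint L) * mat_inv (1\<^sub>m n + L * mat_adjoint L) * mat_inv Y
              * mp_inv N * mat_inv X * mat_inv (1\<^sub>m m + mat_adjoint R * R) * (1\<^sub>m m + mat_adjoint R)"
proof -
  have rn: "r \<le> n" using vec_space.rank_le_nc[OF N] rk by simp
  have rm: "r \<le> m" using rank_le_nr[OF N] rk by simp
  define p where "p = m - r"
  define q where "q = n - r"
  have mpq: "m = r + p" "n = r + q" using rn rm by (auto simp: p_def q_def)
  note u = unitaryD[OF U] and v = unitaryD[OF V]
  have "det \<Sigma> = prod_list (diag_mat \<Sigma>)"
    by (rule det_upper_triangular[OF _ Sig(1)]) (use Sig(1,2) in \<open>auto simp: upper_triangular_def diagonal_mat_def\<close>)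
  moreover have "0 \<notin> set (diag_mat \<Sigma>)"
  proof
    assume "0 \<in> set (diag_mat \<Sigma>)"
    then obtain i where "i < r" "\<Sigma> $$ (i,i) = 0" using Sig(1) by (auto simp: diag_mat_def)
    thus False using Sig(3) by force
  qed
  ultimately have dS: "det \<Sigma> \<noteq> 0" by (simp add: prod_list_zero_iff)
  obtain Si where Si: "Si \<in> carrier_mat r r" "\<Sigma> * Si = 1\<^sub>m r" "Si * \<Sigma> = 1\<^sub>m r"
    using inv_exists[OF Sig(1) dS] by blast
  have cU: "U \<in> carrier_mat m m" "mat_adjoint U \<in> carrier_mat m m" using U unfolding unitary_mat_def by auto
  have cV: "V \<in> carrier_mat n n" "mat_adjoint V \<in> carrier_mat n n" using V unfolding unitary_mat_def by auto
  have dU: "det U * det (mat_adjoint U) = 1"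
    using det_mult[OF cU] u by simp
  have dV: "det V * det (mat_adjoint V) = 1"
    using det_mult[OF cV] v by simp
  have cXt: "four_block_mat X1 (0\<^sub>m r (m - r)) X2 X4 \<in> carrier_mat m m"
    by (rule carrier_matI) (use Xb rm in auto)
  have cYt: "four_block_mat Y1 Y3 (0\<^sub>m (n - r) r) Y4 \<in> carrier_mat n n"
    by (rule carrier_matI) (use Yb rn in auto)
  have "det X = det U * det (four_block_mat X1 (0\<^sub>m r (m - r)) X2 X4) * det (mat_adjoint U)"
  proof -
    have "det (U * (four_block_mat X1 (0\<^sub>m r (m - r)) X2 X4) * mat_adjoint U) = det (U * (four_block_mat X1 (0\<^sub>m r (m - r)) X2 X4)) * det (mat_adjoint U)"
      by (rule det_mult[of _ m]) (use cU cXt in auto)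
    moreover have "det (U * (four_block_mat X1 (0\<^sub>m r (m - r)) X2 X4)) = det U * det (four_block_mat X1 (0\<^sub>m r (m - r)) X2 X4)"
      by (rule det_mult[of _ m]) (use cU cXt in auto)
    ultimately show ?thesis unfolding Xb(4) by simp
  qed
  hence "det (four_block_mat X1 (0\<^sub>m r (m - r)) X2 X4) \<noteq> 0"
    using invertible_det[OF X] dU by (auto simp: mult_ac)
  hence "det X1 * det X4 \<noteq> 0"
    using det_four_block_mat_upper_right_zero[OF Xb(1) refl Xb(2,3)] by simp
  hence dX1: "det X1 \<noteq> 0" and dX4: "det X4 \<noteq> 0" by auto
  obtain X1i where X1i: "X1i \<in> carrier_mat r r" "X1 * X1i = 1\<^sub>m r" "X1i * X1 = 1\<^sub>m r"
    using inv_exists[OF Xb(1) dX1] by blast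
  obtain X4i where X4i: "X4i \<in> carrier_mat p p" "X4 * X4i = 1\<^sub>m p" "X4i * X4 = 1\<^sub>m p"
    using inv_exists[OF Xb(3) dX4] unfolding p_def by blast
  have "det Y = det V * det (four_block_mat Y1 Y3 (0\<^sub>m (n - r) r) Y4) * det (mat_adjoint V)"
  proof -
    have "det (V * (four_block_mat Y1 Y3 (0\<^sub>m (n - r) r) Y4) * mat_adjoint V) = det (V * (four_block_mat Y1 Y3 (0\<^sub>m (n - r) r) Y4)) * det (mat_adjoint V)"
      by (rule det_mult[of _ n]) (use cV cYt in auto)
    moreover have "det (V * (four_block_mat Y1 Y3 (0\<^sub>m (n - r) r) Y4)) = det V * det (four_block_mat Y1 Y3 (0\<^sub>m (n - r) r) Y4)"
      by (rule det_mult[of _ n]) (use cV cYt in auto)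
    ultimately show ?thesis unfolding Yb(4) by simp
  qed
  hence "det (four_block_mat Y1 Y3 (0\<^sub>m (n - r) r) Y4) \<noteq> 0"
    using invertible_det[OF Y] dV by (auto simp: mult_ac)
  hence "det Y1 * det Y4 \<noteq> 0"
    using det_four_block_mat_lower_left_zero[OF Yb(1,2) refl Yb(3)] by simp
  hence dY1: "det Y1 \<noteq> 0" and dY4: "det Y4 \<noteq> 0" by auto
  obtain Y1i where Y1i: "Y1i \<in> carrier_mat r r" "Y1 * Y1i = 1\<^sub>m r" "Y1i * Y1 = 1\<^sub>m r"
    using inv_exists[OF Yb(1) dY1] by blast
  obtain Y4i where Y4i: "Y4i \<in> carrier_mat q q" "Y4 * Y4i = 1\<^sub>m q" "Y4i * Y4 = 1\<^sub>m q"
    using inv_exists[OF Yb(3) dY4] unfolding q_def by blast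
  have cK: "X2 * X1i \<in> carrier_mat p r" using Xb(2) X1i(1) by (auto simp: p_def)
  obtain Fi where Fi: "Fi \<in> carrier_mat r r" "(1\<^sub>m r + mat_adjoint (X2 * X1i) * (X2 * X1i)) * Fi = 1\<^sub>m r"
     "Fi * (1\<^sub>m r + mat_adjoint (X2 * X1i) * (X2 * X1i)) = 1\<^sub>m r"
  proof -
    have "1\<^sub>m r + mat_adjoint (X2 * X1i) * (X2 * X1i) \<in> carrier_mat r r" by (rule carrier_matI) (use cK in auto)
    from inv_exists[OF this posdef_det[OF cK]] show ?thesis using that by blast
  qed
  have cJ: "mat_adjoint (Y1i * Y3) \<in> carrier_mat q r" using Yb(2) Y1i(1) by (auto simp: q_def)
  obtain Gi where Gi: "Gi \<in> carrier_mat r r" "(1\<^sub>m r + (Y1i * Y3) * mat_adjoint (Y1i * Y3)) * Gi = 1\<^sub>m r"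
     "Gi * (1\<^sub>m r + (Y1i * Y3) * mat_adjoint (Y1i * Y3)) = 1\<^sub>m r"
  proof -
    have "1\<^sub>m r + mat_adjoint (mat_adjoint (Y1i * Y3)) * mat_adjoint (Y1i * Y3) \<in> carrier_mat r r" by (rule carrier_matI) (use cJ in auto)
    from inv_exists[OF this posdef_det[OF cJ]] show ?thesis using that by auto
  qed
  interpret B: blk2 \<Sigma> Si X1 X1i X2 X4 X4i Y1 Y1i Y3 Y4 Y4i r p q Fi Gi
    by unfold_locales (use Sig(1) Si X1i X4i Y1i Y4i Xb Yb Fi Gi in \<open>simp_all add: p_def q_def\<close>)
  have mE: "m - r = p" "n - r = q" by (simp_all add: p_def q_def)
  have U': "unitary_mat U (r + p)" and V': "unitary_mat V (r + q)" using U V mpq by simp_all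
  have cB: "B.D \<in> carrier_mat (r + p) (r + q)" "B.Dp \<in> carrier_mat (r + q) (r + p)"
    "B.Xt \<in> carrier_mat (r + p) (r + p)" "B.Xti \<in> carrier_mat (r + p) (r + p)"
    "B.Yt \<in> carrier_mat (r + q) (r + q)" "B.Yti \<in> carrier_mat (r + q) (r + q)"
    "B.Et \<in> carrier_mat (r + p) (r + p)" "B.Ft \<in> carrier_mat (r + q) (r + q)"
    "B.Rt \<in> carrier_mat (r + p) (r + p)" "B.Lt \<in> carrier_mat (r + q) (r + q)"
    "B.Pt \<in> carrier_mat (r + p) (r + p)" "B.Qt \<in> carrier_mat (r + q) (r + q)"
    unfolding B.D_def B.Dp_def B.Xt_def B.Xti_def B.Yt_def B.Yti_def B.Et_def B.Ft_def B.Rt_def B.Lt_def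
      B.Pt_def B.Qt_def by (auto intro!: carrier_matI)
  note dB = cB[THEN carrier_matD(1)] cB[THEN carrier_matD(2)]
  have hN: "N = cj U B.D V" unfolding cj_def B.D_def using svd mE by simp
  have hX: "X = cj U B.Xt U" unfolding cj_def B.Xt_def using Xb(4) mE by simp
  have hY: "Y = cj V B.Yt V" unfolding cj_def B.Yt_def using Yb(4) mE by simp
  have hNp: "mp_inv N = cj V B.Dp U"
    unfolding hN by (rule mp_inv_eq, rule penrose_cj[OF _ _ B.Dpen]) (use U' V' cB in auto)
  have hE: "E_mat N = cj U B.Et U"
  proof -
    have "E_mat N = 1\<^sub>m (r + p) - cj U B.D V * cj V B.Dp U" unfolding E_mat_def hNp
      using N mpq hN u v by simp
    also have "cj U B.D V * cj V B.Dp U = cj U (B.D * B.Dp) U" by (rule cj_mult) (use U' V' cB dB unitaryD[OF U'] unitaryD[OF V'] in auto)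
    also have "1\<^sub>m (r + p) - cj U (B.D * B.Dp) U = cj U (1\<^sub>m (r + p) - B.D * B.Dp) U"
      by (rule one_minus_cj[OF U']) (use cB in auto)
    finally show ?thesis unfolding B.Eeq .
  qed
  have hF: "F_mat N = cj V B.Ft V"
  proof -
    have "F_mat N = 1\<^sub>m (r + q) - cj V B.Dp U * cj U B.D V" unfolding F_mat_def hNp
      using N mpq hN u v by simp
    also have "cj V B.Dp U * cj U B.D V = cj V (B.Dp * B.D) V" by (rule cj_mult) (use U' V' cB dB unitaryD[OF U'] unitaryD[OF V'] in auto)
    also have "1\<^sub>m (r + q) - cj V (B.Dp * B.D) V = cj V (1\<^sub>m (r + q) - B.Dp * B.D) V"
      by (rule one_minus_cj[OF V']) (use cB in auto)
    finally show ?thesis unfolding B.Feq .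
  qed
  have hXi: "mat_inv X = cj U B.Xti U" unfolding hX by (rule inv_cj[OF U' _ _ B.Xinv]) (use cB in auto)
  have hYi: "mat_inv Y = cj V B.Yti V" unfolding hY by (rule inv_cj[OF V' _ _ B.Yinv]) (use cB in auto)
  have hR: "X * E_mat N * mat_inv X * (E_mat N - 1\<^sub>m m) = cj U B.Rt U"
  proof -
    have 1: "X * E_mat N = cj U (B.Xt * B.Et) U" unfolding hX hE by (rule cj_mult) (use U' V' cB dB unitaryD[OF U'] unitaryD[OF V'] in auto)
    have 2: "cj U (B.Xt * B.Et) U * cj U B.Xti U = cj U (B.Xt * B.Et * B.Xti) U" by (rule cj_mult) (use U' V' cB dB unitaryD[OF U'] unitaryD[OF V'] in auto)
    have 3: "E_mat N - 1\<^sub>m m = cj U (B.Et - 1\<^sub>m (r + p)) U" unfolding hE mpq by (rule cj_minus_one[OF U']) (use U' V' cB dB unitaryD[OF U'] unitaryD[OF V'] in auto)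
    have 4: "cj U (B.Xt * B.Et * B.Xti) U * cj U (B.Et - 1\<^sub>m (r + p)) U = cj U (B.Xt * B.Et * B.Xti * (B.Et - 1\<^sub>m (r + p))) U"
      by (rule cj_mult) (use U' V' cB dB unitaryD[OF U'] unitaryD[OF V'] in auto)
    show ?thesis unfolding 1 hXi 2 3 4 B.Rt_eq B.Rt_def ..
  qed
  have hL: "(F_mat N - 1\<^sub>m n) * mat_inv Y * F_mat N * Y = cj V B.Lt V"
  proof -
    have 1: "cj V B.Ft V - 1\<^sub>m (r + q) = cj V (B.Ft - 1\<^sub>m (r + q)) V" by (rule cj_minus_one[OF V']) (use U' V' cB dB unitaryD[OF U'] unitaryD[OF V'] in auto)
    have 2: "cj V (B.Ft - 1\<^sub>m (r + q)) V * cj V B.Yti V = cj V ((B.Ft - 1\<^sub>m (r + q)) * B.Yti) V" by (rule cj_mult) (use U' V' cB dB unitaryD[OF U'] unitaryD[OF V'] in auto)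
    have 3: "cj V ((B.Ft - 1\<^sub>m (r + q)) * B.Yti) V * cj V B.Ft V = cj V ((B.Ft - 1\<^sub>m (r + q)) * B.Yti * B.Ft) V" by (rule cj_mult) (use U' V' cB dB unitaryD[OF U'] unitaryD[OF V'] in auto)
    have 4: "cj V ((B.Ft - 1\<^sub>m (r + q)) * B.Yti * B.Ft) V * cj V B.Yt V = cj V ((B.Ft - 1\<^sub>m (r + q)) * B.Yti * B.Ft * B.Yt) V" by (rule cj_mult) (use U' V' cB dB unitaryD[OF U'] unitaryD[OF V'] in auto)
    show ?thesis unfolding hF hYi unfolding hY mpq(2) unfolding 1 2 3 4 B.Lt_eq B.Lt_def ..
  qed
  have hM: "X * N * Y = cj U (B.Xt * B.D * B.Yt) V"
  proof -
    have 1: "cj U B.Xt U * cj U B.D V = cj U (B.Xt * B.D) V" by (rule cj_mult) (use U' V' cB dB unitaryD[OF U'] unitaryD[OF V'] in auto)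
    have 2: "cj U (B.Xt * B.D) V * cj V B.Yt V = cj U (B.Xt * B.D * B.Yt) V" by (rule cj_mult) (use U' V' cB dB unitaryD[OF U'] unitaryD[OF V'] in auto)
    show ?thesis unfolding hX hN hY 1 2 ..
  qed
  have cL: "B.Lt * mat_adjoint B.Lt \<in> carrier_mat (r + q) (r + q)" "mat_adjoint B.Rt * B.Rt \<in> carrier_mat (r + p) (r + p)"
    "mat_adjoint B.Lt \<in> carrier_mat (r + q) (r + q)" "mat_adjoint B.Rt \<in> carrier_mat (r + p) (r + p)"
    using cB by auto
  have iQ: "mat_inv (1\<^sub>m (r + q) + cj V B.Lt V * mat_adjoint (cj V B.Lt V)) = cj V B.Qt V"
  proof -
    have "cj V B.Lt V * mat_adjoint (cj V B.Lt V) = cj V (B.Lt * mat_adjoint B.Lt) V"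
      by (subst cj_adj, (use cB unitaryD[OF V'] in auto)[2], rule cj_mult) (use U' V' cB dB unitaryD[OF U'] unitaryD[OF V'] in auto)
    moreover have "1\<^sub>m (r + q) + cj V (B.Lt * mat_adjoint B.Lt) V = cj V (1\<^sub>m (r + q) + B.Lt * mat_adjoint B.Lt) V"
      by (rule one_cj_add[OF V']) (use cL in auto)
    moreover have "mat_inv (cj V (1\<^sub>m (r + q) + B.Lt * mat_adjoint B.Lt) V) = cj V B.Qt V"
      by (rule inv_cj[OF V' _ _ B.Qinv]) (use cB cL in auto)
    ultimately show ?thesis by simp
  qed
  have iP: "mat_inv (1\<^sub>m (r + p) + mat_adjoint (cj U B.Rt U) * cj U B.Rt U) = cj U B.Pt U"
  proof -
    have "mat_adjoint (cj U B.Rt U) * cj U B.Rt U = cj U (mat_adjoint B.Rt * B.Rt) U"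
      by (subst cj_adj, (use cB unitaryD[OF U'] in auto)[2], rule cj_mult) (use U' V' cB dB unitaryD[OF U'] unitaryD[OF V'] in auto)
    moreover have "1\<^sub>m (r + p) + cj U (mat_adjoint B.Rt * B.Rt) U = cj U (1\<^sub>m (r + p) + mat_adjoint B.Rt * B.Rt) U"
      by (rule one_cj_add[OF U']) (use cL in auto)
    moreover have "mat_inv (cj U (1\<^sub>m (r + p) + mat_adjoint B.Rt * B.Rt) U) = cj U B.Pt U"
      by (rule inv_cj[OF U' _ _ B.Pinv]) (use cB cL in auto)
    ultimately show ?thesis by simp
  qed
  have aL: "1\<^sub>m (r + q) + mat_adjoint (cj V B.Lt V) = cj V (1\<^sub>m (r + q) + mat_adjoint B.Lt) V"
    by (subst cj_adj, (use cB unitaryD[OF V'] in auto)[2], rule one_cj_add[OF V']) (use cL in auto)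
  have aR: "1\<^sub>m (r + p) + mat_adjoint (cj U B.Rt U) = cj U (1\<^sub>m (r + p) + mat_adjoint B.Rt) U"
    by (subst cj_adj, (use cB unitaryD[OF U'] in auto)[2], rule one_cj_add[OF U']) (use cL in auto)
  let ?Z = "(1\<^sub>m (r + q) + mat_adjoint B.Lt) * B.Qt * B.Yti * B.Dp * B.Xti * B.Pt * (1\<^sub>m (r + p) + mat_adjoint B.Rt)"
  have lhs: "mp_inv (cj U (B.Xt * B.D * B.Yt) V) = cj V ?Z U"
    by (rule mp_inv_eq, rule penrose_cj[OF _ _ B.block_penrose]) (use U' V' cB in auto)
  have rhs: "cj V (1\<^sub>m (r + q) + mat_adjoint B.Lt) V * cj V B.Qt V * cj V B.Yti V * cj V B.Dp U * cj U B.Xti U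
     * cj U B.Pt U * cj U (1\<^sub>m (r + p) + mat_adjoint B.Rt) U = cj V ?Z U"
    using U' V' cB cL unitaryD[OF U'] unitaryD[OF V'] by (simp add: cj_mult)
  show ?thesis unfolding Let_def hR hL hM unfolding mpq iQ iP aL aR hYi hNp hXi lhs rhs ..
qed


end
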